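(* After the event-update procedure has processed an event $e\in E_A$ (with all events processed along a linear extension of the causal order of $M$, each by the monitor of its own lifeline), the following hold for every lifeline $B$: (i) $\mathsf{vc}_A(B)=|\{f\in E_B\mid f\leq_M e\}|$; (ii) if $\mathsf{vc}_A(B)=0$, then all entries $\mathsf{var}_A(B,x)$ and $\mathsf{view}_A(B,\psi)$ are absent; (iii) if $\mathsf{vc}_A(B)=k>0$, then $\mathsf{var}_A(B,x)$ is defined and equal to $\mathsf{val}(e^B_k)(x)$ for every $x\in\mathsf{Vars}(\Phi)$; (iv) if $\mathsf{vc}_A(B)=k>0$, then $\mathsf{view}_A(B,\psi)$ is defined and $\mathsf{view}_A(B,\psi)=1$ iff $M,e^B_k\models\psi$, for every $\psi\in\mathsf{sub}(\Phi)$.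
   Context: Setting. $\mathscr L$ is a finite set of lifelines. A message sequence chart (MSC) is $M=(E,\to,\lhd,\mathsf{kind},\mathsf{pid},\mathsf{val})$ with $E$ a finite set of events, $\mathsf{pid}:E\to\mathscr L$, $E_A=\{e\in E\mid \mathsf{pid}(e)=A\}$. The relation $\to$ relates only events on the same lifeline, and for each $A$ its restriction to $E_A$ is the immediate-successor relation of a finite linear order $\leq_A$ (strict version $<_A$). $\mathsf{kind}(e)\in\{\mathsf{act},\mathsf{recv},\mathsf{choice}\}\cup(\{\mathsf{send}\}\times\mathscr L)$. The message relation $\lhd$ is a partial matching: if $s\lhd r$ then $\mathsf{kind}(s)=(\mathsf{send},\mathsf{pid}(r))$, $\mathsf{kind}(r)=\mathsf{recv}$, $\mathsf{pid}(s)\neq\mathsf{pid}(r)$; every receive has exactly one matching send, every send at most one matching receive (not necessarily FIFO). The graph of $\to$ and $\lhd$ edges is acyclic; the causal order $\leq_M$ is its reflexive transitive closure. $\nu_e=\mathsf{val}(e)$ is the valuation (local store of $\mathsf{pid}(e)$ after $e$). $e^B_k$ is the $k$-th event of lifeline $B$ (indexing from 1). Causal Past Logic (CPL): terms $t::=x\mid A.x$; atoms $\alpha::=p(t_1,\dots,t_n)$; formulas $\varphi::=\alpha\mid @_A\varphi\mid \mathsf{Y}\varphi\mid\varphi_1\mathbin{\mathsf{S}}\varphi_2\mid\varphi_1\wedge\varphi_2\mid\varphi_1\vee\varphi_2\mid\neg\varphi$. For $e$ with $\mathsf{pid}(e)=A$: $\mathsf{last}_{\mathsf{loc}}(e)=\max\{f\in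 E_A\mid f<_A e\}$ and $\mathsf{last}_B(e)=\max\{f\in E_B\mid f\leq_M e\}$ (when they exist). Term $x$ evaluates to $\nu_e(x)$, term $A.x$ to $\nu_{\mathsf{last}_A(e)}(x)$ when defined; an atom is false if a term is undefined, otherwise its truth is fixed by the application. $M,e\models\mathsf{Y}\varphi$ iff $\mathsf{last}_{\mathsf{loc}}(e)$ exists and satisfies $\varphi$; $M,e\models @_A\varphi$ iff $\mathsf{last}_A(e)$ exists and satisfies $\varphi$; for $e\in E_A$, $M,e\models\varphi_1\mathbin{\mathsf{S}}\varphi_2$ iff some $f\leq_A e$ in $E_A$ satisfies $\varphi_2$ and all $g\in E_A$ with $f<_A g\leq_A e$ satisfy $\varphi_1$; Booleans as usual. Monitor. $\Phi$ is a finite set of CPL formulas, $\mathsf{sub}(\Phi)$ its subformulas, $\mathsf{Vars}(\Phi)$ the variable names in terms $B.x$. Each lifeline $A$ keeps a vector clock $\mathsf{vc}_A:\mathscr L\to\mathbb N$ (initially all $0$), partial tables $\mathsf{view}_A:\mathscr L\times\mathsf{sub}(\Phi)\rightharpoonup\{0,1\}$ and $\mathsf{var}_A:\mathscr L\times\mathsf{Vars}(\Phi)\rightharpoonup\mathsf{Val}$ (initially empty), a local store $\sigma_A$, and a total map $\mathsf{old}_A:\mathsf{sub}(\Phi)\to\{0,1\}$. Formula evaluation $\mathsf{Eval}_A(\psi,e,\mathsf{old}_A)$: atoms read unqualified variables from $\sigma_A$ and $B.x$ from $\mathsf{var}_A(B,x)$ (missing entry makes the atom false); $\mathsf{Y}\theta\mapsto(\mathsf{vc}_A(A)>1)\wedge\mathsf{old}_A(\theta)$;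 $@_B\theta\mapsto$ $\mathsf{Eval}_A(\theta,\cdot)$ if $B=A$, $0$ if $\mathsf{vc}_A(B)=0$, else $\mathsf{view}_A(B,\theta)$; $\theta_1\mathbin{\mathsf{S}}\theta_2\mapsto\mathsf{Eval}_A(\theta_2,\cdot)\vee(\mathsf{Eval}_A(\theta_1,\cdot)\wedge(\mathsf{vc}_A(A)>1)\wedge\mathsf{old}_A(\theta_1\mathbin{\mathsf{S}}\theta_2))$; Booleans recursively. Event-update procedure for a new event $e$ on $A$: (1) if $e$ is a receive with incoming message $\mu$, then for each $B$ with $\mu.\mathsf{vc}(B)>\mathsf{vc}_A(B)$ copy $\mathsf{view}_A(B,\psi)\gets\mu.\mathsf{view}(B,\psi)$ for all $\psi$ and $\mathsf{var}_A(B,x)\gets\mu.\mathsf{var}(B,x)$ for all $x$; then $\mathsf{vc}_A\gets\max(\mathsf{vc}_A,\mu.\mathsf{vc})$ pointwise. (2) For all $\psi$, $\mathsf{old}_A(\psi)\gets\mathsf{view}_A(A,\psi)$ if defined, else $0$. (3) $\mathsf{vc}_A(A)\gets\mathsf{vc}_A(A)+1$; $\sigma_A\gets\mathsf{effect}(e,\sigma_A)$ (the store after this step induces $\mathsf{val}(e)$); $\mathsf{var}_A(A,x)\gets\sigma_A(x)$ for all $x\in\mathsf{Vars}(\Phi)$. (4) Evaluate all $\psi\in\mathsf{sub}(\Phi)$ bottom-up via $\mathsf{Eval}_A$, then set $\mathsf{view}_A(A,\psi)$ to the results. (5) If $\mathsf{kind}(e)=(\mathsf{send},B)$, send to $B$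 the message (payload, $\mathsf{vc}_A$, $\mathsf{view}_A$, $\mathsf{var}_A$). Used fact (Local evaluation lemma): if before step (4) the state is coherent — i.e. $\mathsf{vc}_A(B)=|\{f\in E_B\mid f\leq_M e\}|$ for all $B$; entries for $B\neq A$ with $k=\mathsf{vc}_A(B)>0$ correctly describe $e^B_k$ and are absent when $\mathsf{vc}_A(B)=0$; $\sigma_A$ and $\mathsf{var}_A(A,\cdot)$ agree with $\mathsf{val}(e)$; $\mathsf{old}_A(\psi)$ is the truth of $\psi$ at the previous local event (false if none) — then $\mathsf{Eval}_A(\psi,e,\mathsf{old}_A)=1$ iff $M,e\models\psi$. *)

theory Defs
  imports Main
begin

datatype 'l kind = Act | Recv | Choice | Send 'l

record ('e, 'l, 'v, 'd) msc =
  ev   :: "'e set"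
  nxt  :: "'e \<Rightarrow> 'e \<Rightarrow> bool"
  msg  :: "'e \<Rightarrow> 'e \<Rightarrow> bool"
  kind :: "'e \<Rightarrow> 'l kind"
  pid  :: "'e \<Rightarrow> 'l"
  val  :: "'e \<Rightarrow> 'v \<Rightarrow> 'd"

definition evs_of :: "('e, 'l, 'v, 'd) msc \<Rightarrow> 'l \<Rightarrow> 'e set" where
  "evs_of M A = {e \<in> ev M. pid M e = A}"

definition wf_msc :: "('e, 'l, 'v, 'd) msc \<Rightarrow> bool" where
  "wf_msc M \<longleftrightarrow>
     finite (ev M)
   \<and> (\<forall>e f. nxt M e f \<longrightarrow> e \<in> ev M \<and> f \<in> ev M \<and> pid M e = pid M f)
   \<and> (\<forall>A. \<exists>r. linear_order_on (evs_of M A) r \<and>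
         (\<forall>e\<in>evs_of M A. \<forall>f\<in>evs_of M A.
            nxt M e f \<longleftrightarrow> ((e, f) \<in> r \<and> e \<noteq> f \<and>
               \<not> (\<exists>g\<in>evs_of M A. (e, g) \<in> r \<and> (g, f) \<in> r \<and> g \<noteq> e \<and> g \<noteq> f))))
   \<and> (\<forall>s r. msg M s r \<longrightarrow> s \<in> ev M \<and> r \<in> ev M \<and> kind M s = Send (pid M r)
                          \<and> kind M r = Recv \<and> pid M s \<noteq> pid M r)
   \<and> (\<forall>r\<in>ev M. kind M r = Recv \<longrightarrow> (\<exists>!s. msg M s r))
   \<and> (\<forall>s r1 r2. msg M s r1 \<longrightarrow> msg M s r2 \<longrightarrow> r1 = r2)
   \<and> acyclic {(e, f). nxt M e f \<or> msg M e f}"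

definition causal_le :: "('e, 'l, 'v, 'd) msc \<Rightarrow> 'e \<Rightarrow> 'e \<Rightarrow> bool" where
  "causal_le M e f \<longleftrightarrow> e \<in> ev M \<and> f \<in> ev M \<and> (e, f) \<in> {(a, b). nxt M a b \<or> msg M a b}\<^sup>*"

definition loc_le :: "('e, 'l, 'v, 'd) msc \<Rightarrow> 'e \<Rightarrow> 'e \<Rightarrow> bool" where
  "loc_le M e f \<longleftrightarrow> e \<in> ev M \<and> f \<in> ev M \<and> pid M e = pid M f \<and> (e, f) \<in> {(a, b). nxt M a b}\<^sup>*"

definition loc_less :: "('e, 'l, 'v, 'd) msc \<Rightarrow> 'e \<Rightarrow> 'e \<Rightarrow> bool" where
  "loc_less M e f \<longleftrightarrow> loc_le M e f \<and> e \<noteq> f"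

definition last_loc :: "('e, 'l, 'v, 'd) msc \<Rightarrow> 'e \<Rightarrow> 'e option" where
  "last_loc M e = (if \<exists>f. loc_less M f e
     then Some (THE f. loc_less M f e \<and> (\<forall>g. loc_less M g e \<longrightarrow> loc_le M g f))
     else None)"

definition last_of :: "('e, 'l, 'v, 'd) msc \<Rightarrow> 'l \<Rightarrow> 'e \<Rightarrow> 'e option" where
  "last_of M B e = (let S = {f \<in> evs_of M B. causal_le M f e} in
     if S = {} then None else Some (THE f. f \<in> S \<and> (\<forall>g\<in>S. loc_le M g f)))"

text \<open>kth M B k = e^B_k, the k-th event of lifeline B (indexing from 1).\<close>
definition kth :: "('e, 'l, 'v, 'd) msc \<Rightarrow> 'l \<Rightarrow> nat \<Rightarrow> 'e" where
  "kth M B k = (THE f. f \<in> evs_of M B \<and> card {g \<in> evs_of M B. loc_le M g f} = k)"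

definition lin_ext :: "('e, 'l, 'v, 'd) msc \<Rightarrow> 'e list \<Rightarrow> bool" where
  "lin_ext M xs \<longleftrightarrow> distinct xs \<and> set xs = ev M \<and>
     (\<forall>i<length xs. \<forall>j<length xs. causal_le M (xs ! i) (xs ! j) \<longrightarrow> i \<le> j)"

datatype ('l, 'v) trm = LVar 'v | RVar 'l 'v

datatype ('l, 'v, 'p) cpl =
    Atom 'p "('l, 'v) trm list"
  | At 'l "('l, 'v, 'p) cpl"
  | Y "('l, 'v, 'p) cpl"
  | Since "('l, 'v, 'p) cpl" "('l, 'v, 'p) cpl"
  | Conj "('l, 'v, 'p) cpl" "('l, 'v, 'p) cpl"
  | Disj "('l, 'v, 'p) cpl" "('l, 'v, 'p) cpl"
  | Neg "('l, 'v, 'p) cpl"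

fun teval :: "('e, 'l, 'v, 'd) msc \<Rightarrow> 'e \<Rightarrow> ('l, 'v) trm \<Rightarrow> 'd option" where
  "teval M e (LVar x) = Some (val M e x)"
| "teval M e (RVar B x) = map_option (\<lambda>f. val M f x) (last_of M B e)"

primrec sat :: "('e, 'l, 'v, 'd) msc \<Rightarrow> ('p \<Rightarrow> 'd list \<Rightarrow> bool) \<Rightarrow> 'e \<Rightarrow> ('l, 'v, 'p) cpl \<Rightarrow> bool" where
  "sat M I e (Atom p ts) = (case those (map (teval M e) ts) of None \<Rightarrow> False | Some ds \<Rightarrow> I p ds)"
| "sat M I e (At B \<phi>) = (case last_of M B e of None \<Rightarrow> False | Some f \<Rightarrow> sat M I f \<phi>)"
| "sat M I e (Y \<phi>) = (case last_loc M e of None \<Rightarrow> False | Some f \<Rightarrow> sat M I f \<phi>)"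
| "sat M I e (Since \<phi>1 \<phi>2) = (\<exists>f. loc_le M f e \<and> sat M I f \<phi>2 \<and>
       (\<forall>g. loc_less M f g \<and> loc_le M g e \<longrightarrow> sat M I g \<phi>1))"
| "sat M I e (Conj \<phi>1 \<phi>2) = (sat M I e \<phi>1 \<and> sat M I e \<phi>2)"
| "sat M I e (Disj \<phi>1 \<phi>2) = (sat M I e \<phi>1 \<or> sat M I e \<phi>2)"
| "sat M I e (Neg \<phi>) = (\<not> sat M I e \<phi>)"

primrec subf :: "('l, 'v, 'p) cpl \<Rightarrow> ('l, 'v, 'p) cpl set" where
  "subf (Atom p ts) = {Atom p ts}"
| "subf (At B \<phi>) = insert (At B \<phi>) (subf \<phi>)"
| "subf (Y \<phi>) = insert (Y \<phi>) (subf \<phi>)"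
| "subf (Since \<phi>1 \<phi>2) = insert (Since \<phi>1 \<phi>2) (subf \<phi>1 \<union> subf \<phi>2)"
| "subf (Conj \<phi>1 \<phi>2) = insert (Conj \<phi>1 \<phi>2) (subf \<phi>1 \<union> subf \<phi>2)"
| "subf (Disj \<phi>1 \<phi>2) = insert (Disj \<phi>1 \<phi>2) (subf \<phi>1 \<union> subf \<phi>2)"
| "subf (Neg \<phi>) = insert (Neg \<phi>) (subf \<phi>)"

definition sub :: "('l, 'v, 'p) cpl set \<Rightarrow> ('l, 'v, 'p) cpl set" where
  "sub \<Phi> = (\<Union>\<phi>\<in>\<Phi>. subf \<phi>)"

fun rvars_t :: "('l, 'v) trm \<Rightarrow> 'v set" where
  "rvars_t (LVar x) = {}"
| "rvars_t (RVar B x) = {x}"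

primrec rvars :: "('l, 'v, 'p) cpl \<Rightarrow> 'v set" where
  "rvars (Atom p ts) = (\<Union>t\<in>set ts. rvars_t t)"
| "rvars (At B \<phi>) = rvars \<phi>"
| "rvars (Y \<phi>) = rvars \<phi>"
| "rvars (Since \<phi>1 \<phi>2) = rvars \<phi>1 \<union> rvars \<phi>2"
| "rvars (Conj \<phi>1 \<phi>2) = rvars \<phi>1 \<union> rvars \<phi>2"
| "rvars (Disj \<phi>1 \<phi>2) = rvars \<phi>1 \<union> rvars \<phi>2"
| "rvars (Neg \<phi>) = rvars \<phi>"

definition Vars :: "('l, 'v, 'p) cpl set \<Rightarrow> 'v set" where
  "Vars \<Phi> = (\<Union>\<phi>\<in>\<Phi>. rvars \<phi>)"

record ('l, 'v, 'd, 'p) lstate =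
  vc    :: "'l \<Rightarrow> nat"
  view  :: "'l \<times> ('l, 'v, 'p) cpl \<Rightarrow> bool option"
  var   :: "'l \<times> 'v \<Rightarrow> 'd option"
  store :: "'v \<Rightarrow> 'd"
  old   :: "('l, 'v, 'p) cpl \<Rightarrow> bool"

record ('l, 'v, 'd, 'p) message =
  mvc   :: "'l \<Rightarrow> nat"
  mview :: "'l \<times> ('l, 'v, 'p) cpl \<Rightarrow> bool option"
  mvar  :: "'l \<times> 'v \<Rightarrow> 'd option"

fun ateval :: "('l, 'v, 'd, 'p) lstate \<Rightarrow> ('l, 'v) trm \<Rightarrow> 'd option" where
  "ateval s (LVar x) = Some (store s x)"
| "ateval s (RVar B x) = var s (B, x)"

primrec Eval :: "('p \<Rightarrow> 'd list \<Rightarrow> bool) \<Rightarrow> 'l \<Rightarrow> ('l, 'v, 'd, 'p) lstate \<Rightarrow> ('l, 'v, 'p) cpl \<Rightarrow> bool" where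
  "Eval I A s (Atom p ts) = (case those (map (ateval s) ts) of None \<Rightarrow> False | Some ds \<Rightarrow> I p ds)"
| "Eval I A s (Y \<theta>) = (vc s A > 1 \<and> old s \<theta>)"
| "Eval I A s (At B \<theta>) = (if B = A then Eval I A s \<theta>
                          else if vc s B = 0 then False else view s (B, \<theta>) = Some True)"
| "Eval I A s (Since \<theta>1 \<theta>2) = (Eval I A s \<theta>2 \<or> (Eval I A s \<theta>1 \<and> vc s A > 1 \<and> old s (Since \<theta>1 \<theta>2)))"
| "Eval I A s (Conj \<theta>1 \<theta>2) = (Eval I A s \<theta>1 \<and> Eval I A s \<theta>2)"
| "Eval I A s (Disj \<theta>1 \<theta>2) = (Eval I A s \<theta>1 \<or> Eval I A s \<theta>2)"
| "Eval I A s (Neg \<theta>) = (\<not> Eval I A s \<theta>)"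

text \<open>Step (1): merge an incoming message.\<close>
definition recv_update :: "('l, 'v, 'd, 'p) message \<Rightarrow> ('l, 'v, 'd, 'p) lstate \<Rightarrow> ('l, 'v, 'd, 'p) lstate" where
  "recv_update \<mu> s =
     s\<lparr> view := (\<lambda>(B, \<psi>). if mvc \<mu> B > vc s B then mview \<mu> (B, \<psi>) else view s (B, \<psi>)),
        var  := (\<lambda>(B, x). if mvc \<mu> B > vc s B then mvar \<mu> (B, x) else var s (B, x)),
        vc   := (\<lambda>B. max (vc s B) (mvc \<mu> B)) \<rparr>"

text \<open>Steps (2)-(4) on lifeline A for event e.\<close>
definition local_step ::
  "('l, 'v, 'p) cpl set \<Rightarrow> ('p \<Rightarrow> 'd list \<Rightarrow> bool) \<Rightarrow> ('e \<Rightarrow> ('v \<Rightarrow> 'd) \<Rightarrow> ('v \<Rightarrow> 'd))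
   \<Rightarrow> 'l \<Rightarrow> 'e \<Rightarrow> ('l, 'v, 'd, 'p) lstate \<Rightarrow> ('l, 'v, 'd, 'p) lstate" where
  "local_step \<Phi> I eff A e s1 = (let
     s2 = s1\<lparr> old := (\<lambda>\<psi>. view s1 (A, \<psi>) = Some True) \<rparr>;
     \<sigma>' = eff e (store s2);
     s3 = s2\<lparr> vc := (vc s2)(A := Suc (vc s2 A)), store := \<sigma>',
              var := (\<lambda>(B, x). if B = A \<and> x \<in> Vars \<Phi> then Some (\<sigma>' x) else var s2 (B, x)) \<rparr>
   in s3\<lparr> view := (\<lambda>(B, \<psi>). if B = A \<and> \<psi> \<in> sub \<Phi> then Some (Eval I A s3 \<psi>) else view s3 (B, \<psi>)) \<rparr>)"

text \<open>Global state: the local state of every lifeline's monitor, and the messages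
  emitted at send events (indexed by the send event).\<close>
type_synonym ('e, 'l, 'v, 'd, 'p) gstate =
  "('l \<Rightarrow> ('l, 'v, 'd, 'p) lstate) \<times> ('e \<Rightarrow> ('l, 'v, 'd, 'p) message option)"

definition gstep ::
  "('e, 'l, 'v, 'd) msc \<Rightarrow> ('l, 'v, 'p) cpl set \<Rightarrow> ('p \<Rightarrow> 'd list \<Rightarrow> bool)
   \<Rightarrow> ('e \<Rightarrow> ('v \<Rightarrow> 'd) \<Rightarrow> ('v \<Rightarrow> 'd)) \<Rightarrow> ('e, 'l, 'v, 'd, 'p) gstate \<Rightarrow> 'e \<Rightarrow> ('e, 'l, 'v, 'd, 'p) gstate" where
  "gstep M \<Phi> I eff g e = (let
     L = fst g; mb = snd g;
     A = pid M e;
     s1 = (if kind M e = Recv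
           then (case mb (THE s. msg M s e) of Some \<mu> \<Rightarrow> recv_update \<mu> (L A) | None \<Rightarrow> L A)
           else L A);
     s = local_step \<Phi> I eff A e s1;
     mb' = (case kind M e of
              Send B \<Rightarrow> mb(e := Some \<lparr> mvc = vc s, mview = view s, mvar = var s \<rparr>)
            | _ \<Rightarrow> mb)
   in (L(A := s), mb'))"

definition init_state :: "('l \<Rightarrow> ('v \<Rightarrow> 'd)) \<Rightarrow> ('e, 'l, 'v, 'd, 'p) gstate" where
  "init_state \<sigma>0 = ((\<lambda>A. \<lparr> vc = (\<lambda>_. 0), view = (\<lambda>_. None), var = (\<lambda>_. None),
                            store = \<sigma>0 A, old = (\<lambda>_. False) \<rparr>), (\<lambda>_. None))"

definition run ::
  "('e, 'l, 'v, 'd) msc \<Rightarrow> ('l, 'v, 'p) cpl set \<Rightarrow> ('p \<Rightarrow> 'd list \<Rightarrow> bool)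
   \<Rightarrow> ('e \<Rightarrow> ('v \<Rightarrow> 'd) \<Rightarrow> ('v \<Rightarrow> 'd)) \<Rightarrow> ('l \<Rightarrow> ('v \<Rightarrow> 'd)) \<Rightarrow> 'e list \<Rightarrow> ('e, 'l, 'v, 'd, 'p) gstate" where
  "run M \<Phi> I eff \<sigma>0 xs = foldl (gstep M \<Phi> I eff) (init_state \<sigma>0) xs"

definition val_induced :: "('e, 'l, 'v, 'd) msc \<Rightarrow> ('e \<Rightarrow> ('v \<Rightarrow> 'd) \<Rightarrow> ('v \<Rightarrow> 'd)) \<Rightarrow> ('l \<Rightarrow> ('v \<Rightarrow> 'd)) \<Rightarrow> bool" where
  "val_induced M eff \<sigma>0 \<longleftrightarrow> (\<forall>e\<in>ev M. val M e =
     eff e (case last_loc M e of None \<Rightarrow> \<sigma>0 (pid M e) | Some f \<Rightarrow> val M f))"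

end

theory Submission imports Defs begin

definition Dset :: "('e, 'l, 'v, 'd) msc \<Rightarrow> 'e \<Rightarrow> 'l \<Rightarrow> 'e set" where
  "Dset M x B = {f \<in> evs_of M B. causal_le M f x}"

definition rnk :: "('e, 'l, 'v, 'd) msc \<Rightarrow> 'l \<Rightarrow> 'e \<Rightarrow> nat" where
  "rnk M B f = card {g \<in> evs_of M B. loc_le M g f}"


lemma subf_self: "\<psi> \<in> subf \<psi>" by (cases \<psi>) auto

lemma subf_trans: "\<chi> \<in> subf \<psi> \<Longrightarrow> subf \<chi> \<subseteq> subf \<psi>"
  by (induction \<psi>) auto

lemma sub_closed: "\<psi> \<in> sub \<Phi> \<Longrightarrow> \<chi> \<in> subf \<psi> \<Longrightarrow> \<chi> \<in> sub \<Phi>"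
  unfolding sub_def using subf_trans by blast

lemma rvars_sub: "\<chi> \<in> subf \<psi> \<Longrightarrow> rvars \<chi> \<subseteq> rvars \<psi>"
  by (induction \<psi>) auto

lemma atom_vars: "Atom p ts \<in> sub \<Phi> \<Longrightarrow> RVar B x \<in> set ts \<Longrightarrow> x \<in> Vars \<Phi>"
proof -
  assume a: "Atom p ts \<in> sub \<Phi>" "RVar B x \<in> set ts"
  then obtain \<phi> where "\<phi> \<in> \<Phi>" "Atom p ts \<in> subf \<phi>" unfolding sub_def by blast
  moreover have "x \<in> rvars (Atom p ts)" using a by force
  ultimately show ?thesis using rvars_sub unfolding Vars_def by blast
qed

locale setting =
  fixes M :: "('e, 'l, 'v, 'd) msc" and xs :: "'e list"
  assumes wf: "wf_msc M" and lin: "lin_ext M xs"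
begin

lemma fin: "finite (ev M)" using wf unfolding wf_msc_def by blast

lemma fin_evs: "finite (evs_of M B)" using fin unfolding evs_of_def by simp

lemma nxtD: "nxt M e f \<Longrightarrow> e \<in> ev M \<and> f \<in> ev M \<and> pid M e = pid M f"
  using wf unfolding wf_msc_def by blast

lemma msgD: "msg M s r \<Longrightarrow> s \<in> ev M \<and> r \<in> ev M \<and> kind M s = Send (pid M r)
                          \<and> kind M r = Recv \<and> pid M s \<noteq> pid M r"
  using wf unfolding wf_msc_def by blast

lemma recv_ex: "r \<in> ev M \<Longrightarrow> kind M r = Recv \<Longrightarrow> \<exists>!s. msg M s r"
  using wf unfolding wf_msc_def by blast

lemma lin_ord: "\<exists>r. linear_order_on (evs_of M A) r \<and>
         (\<forall>e\<in>evs_of M A. \<forall>f\<in>evs_of M A.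
            nxt M e f \<longleftrightarrow> ((e, f) \<in> r \<and> e \<noteq> f \<and>
               \<not> (\<exists>g\<in>evs_of M A. (e, g) \<in> r \<and> (g, f) \<in> r \<and> g \<noteq> e \<and> g \<noteq> f)))"
  using wf unfolding wf_msc_def by blast

lemma loc_leD: "loc_le M e f \<Longrightarrow> e \<in> ev M \<and> f \<in> ev M \<and> pid M e = pid M f"
  unfolding loc_le_def by blast

lemma loc_le_refl: "e \<in> ev M \<Longrightarrow> loc_le M e e"
  unfolding loc_le_def by blast

lemma loc_le_trans: "loc_le M e f \<Longrightarrow> loc_le M f g \<Longrightarrow> loc_le M e g"
  unfolding loc_le_def by (auto intro: rtrancl_trans)

lemma causal_refl: "e \<in> ev M \<Longrightarrow> causal_le M e e"
  unfolding causal_le_def by blast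

lemma causal_trans: "causal_le M e f \<Longrightarrow> causal_le M f g \<Longrightarrow> causal_le M e g"
  unfolding causal_le_def by (meson rtrancl_trans)

lemma loc_causal: "loc_le M e f \<Longrightarrow> causal_le M e f"
proof -
  assume "loc_le M e f"
  then have "(e, f) \<in> {(a, b). nxt M a b}\<^sup>*" "e \<in> ev M" "f \<in> ev M" unfolding loc_le_def by auto
  moreover have "{(a, b). nxt M a b}\<^sup>* \<subseteq> {(a, b). nxt M a b \<or> msg M a b}\<^sup>*"
    by (rule rtrancl_mono) blast
  ultimately show ?thesis unfolding causal_le_def by blast
qed

lemma causal_ev: "causal_le M e f \<Longrightarrow> e \<in> ev M \<and> f \<in> ev M"
  unfolding causal_le_def by blast

lemma idx: "e \<in> ev M \<Longrightarrow> \<exists>i<length xs. xs ! i = e"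
  using lin unfolding lin_ext_def by (metis in_set_conv_nth)

lemma causal_idx: "causal_le M (xs ! i) (xs ! j) \<Longrightarrow> i < length xs \<Longrightarrow> j < length xs \<Longrightarrow> i \<le> j"
  using lin unfolding lin_ext_def by blast

lemma dist: "distinct xs" using lin unfolding lin_ext_def by blast

lemma causal_antisym: "causal_le M e f \<Longrightarrow> causal_le M f e \<Longrightarrow> e = f"
proof -
  assume a: "causal_le M e f" "causal_le M f e"
  obtain i where i: "i < length xs" "xs ! i = e" using idx causal_ev a by blast
  obtain j where j: "j < length xs" "xs ! j = f" using idx causal_ev a by blast
  have "i \<le> j" "j \<le> i" using causal_idx a i j by blast+
  then show ?thesis using i j by simp
qed

lemma loc_antisym: "loc_le M e f \<Longrightarrow> loc_le M f e \<Longrightarrow> e = f"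
  using causal_antisym loc_causal by blast

lemma r_loc:
  assumes lo: "linear_order_on (evs_of M A) r"
    and cov: "\<forall>e\<in>evs_of M A. \<forall>f\<in>evs_of M A.
            nxt M e f \<longleftrightarrow> ((e, f) \<in> r \<and> e \<noteq> f \<and>
               \<not> (\<exists>g\<in>evs_of M A. (e, g) \<in> r \<and> (g, f) \<in> r \<and> g \<noteq> e \<and> g \<noteq> f))"
  shows "(f, g) \<in> r \<Longrightarrow> f \<in> evs_of M A \<Longrightarrow> g \<in> evs_of M A \<Longrightarrow> loc_le M f g"
proof (induct "card {h \<in> evs_of M A. (f, h) \<in> r \<and> (h, g) \<in> r}" arbitrary: f g rule: less_induct)
  case less
  have tr: "trans r" and an: "antisym r" and rf: "refl_on (evs_of M A) r"
    using lo unfolding linear_order_on_def partial_order_on_def preorder_on_def by auto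
  have fE: "f \<in> ev M" "g \<in> ev M" "pid M f = A" "pid M g = A" using less.prems unfolding evs_of_def by auto
  show ?case
  proof (cases "f = g")
    case True then show ?thesis using loc_le_refl fE by simp
  next
    case fg: False
    show ?thesis
    proof (cases "\<exists>h\<in>evs_of M A. (f, h) \<in> r \<and> (h, g) \<in> r \<and> h \<noteq> f \<and> h \<noteq> g")
      case False
      then have "nxt M f g" using cov less.prems fg by blast
      then show ?thesis unfolding loc_le_def using fE by (auto intro: r_into_rtrancl)
    next
      case True
      then obtain h where h: "h \<in> evs_of M A" "(f, h) \<in> r" "(h, g) \<in> r" "h \<noteq> f" "h \<noteq> g" by blast
      let ?S = "{h' \<in> evs_of M A. (f, h') \<in> r \<and> (h', g) \<in> r}"
      have finS: "finite ?S" using fin_evs by simp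
      have "{h' \<in> evs_of M A. (f, h') \<in> r \<and> (h', h) \<in> r} \<subset> ?S"
      proof
        show "{h' \<in> evs_of M A. (f, h') \<in> r \<and> (h', h) \<in> r} \<subseteq> ?S"
          using h tr by (auto dest: transD)
        have "g \<in> ?S" using less.prems rf by (auto simp: refl_on_def)
        moreover have "g \<notin> {h' \<in> evs_of M A. (f, h') \<in> r \<and> (h', h) \<in> r}"
          using h an by (auto dest: antisymD)
        ultimately show "{h' \<in> evs_of M A. (f, h') \<in> r \<and> (h', h) \<in> r} \<noteq> ?S" by blast
      qed
      then have c1: "card {h' \<in> evs_of M A. (f, h') \<in> r \<and> (h', h) \<in> r} < card ?S"
        using finS psubset_card_mono by blast
      have "{h' \<in> evs_of M A. (h, h') \<in> r \<and> (h', g) \<in> r} \<subset> ?S"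
      proof
        show "{h' \<in> evs_of M A. (h, h') \<in> r \<and> (h', g) \<in> r} \<subseteq> ?S"
          using h tr by (auto dest: transD)
        have "f \<in> ?S" using less.prems rf by (auto simp: refl_on_def)
        moreover have "f \<notin> {h' \<in> evs_of M A. (h, h') \<in> r \<and> (h', g) \<in> r}"
          using h an by (auto dest: antisymD)
        ultimately show "{h' \<in> evs_of M A. (h, h') \<in> r \<and> (h', g) \<in> r} \<noteq> ?S" by blast
      qed
      then have c2: "card {h' \<in> evs_of M A. (h, h') \<in> r \<and> (h', g) \<in> r} < card ?S"
        using finS psubset_card_mono by blast
      have "loc_le M f h" using less.hyps[OF c1] h less.prems by blast
      moreover have "loc_le M h g" using less.hyps[OF c2] h less.prems by blast
      ultimately show ?thesis using loc_le_trans by blast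
    qed
  qed
qed

lemma loc_total: "e \<in> evs_of M A \<Longrightarrow> f \<in> evs_of M A \<Longrightarrow> loc_le M e f \<or> loc_le M f e"
proof -
  assume a: "e \<in> evs_of M A" "f \<in> evs_of M A"
  from lin_ord[of A] obtain r where R: "linear_order_on (evs_of M A) r \<and>
         (\<forall>e\<in>evs_of M A. \<forall>f\<in>evs_of M A.
            nxt M e f \<longleftrightarrow> ((e, f) \<in> r \<and> e \<noteq> f \<and>
               \<not> (\<exists>g\<in>evs_of M A. (e, g) \<in> r \<and> (g, f) \<in> r \<and> g \<noteq> e \<and> g \<noteq> f)))" ..
  note lo = conjunct1[OF R] and cov = conjunct2[OF R]
  show ?thesis
  proof (cases "e = f")
    case True then show ?thesis using a loc_le_refl unfolding evs_of_def by auto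
  next
    case False
    then have "(e, f) \<in> r \<or> (f, e) \<in> r" using lo a unfolding linear_order_on_def total_on_def by blast
    then show ?thesis using r_loc[OF lo cov, of e f] r_loc[OF lo cov, of f e] a by blast
  qed
qed


lemma nxt_neq: "nxt M e f \<Longrightarrow> e \<noteq> f"
proof -
  assume a: "nxt M e f"
  let ?A = "pid M e"
  from lin_ord[of ?A] obtain r where R: "linear_order_on (evs_of M ?A) r \<and>
         (\<forall>e\<in>evs_of M ?A. \<forall>f\<in>evs_of M ?A.
            nxt M e f \<longleftrightarrow> ((e, f) \<in> r \<and> e \<noteq> f \<and>
               \<not> (\<exists>g\<in>evs_of M ?A. (e, g) \<in> r \<and> (g, f) \<in> r \<and> g \<noteq> e \<and> g \<noteq> f)))" ..
  have "e \<in> evs_of M ?A" "f \<in> evs_of M ?A" using nxtD[OF a] unfolding evs_of_def by auto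
  then show ?thesis using a conjunct2[OF R] by blast
qed

lemma nxt_loc_less: "nxt M g e \<Longrightarrow> loc_less M g e"
  unfolding loc_less_def loc_le_def using nxtD nxt_neq by (auto intro: r_into_rtrancl)

lemma causal_same_loc: "causal_le M f e \<Longrightarrow> pid M f = pid M e \<Longrightarrow> loc_le M f e"
proof -
  assume a: "causal_le M f e" "pid M f = pid M e"
  then have "f \<in> evs_of M (pid M e)" "e \<in> evs_of M (pid M e)" using causal_ev unfolding evs_of_def by auto
  then have "loc_le M f e \<or> loc_le M e f" using loc_total by blast
  then show ?thesis using a loc_causal causal_antisym by blast
qed

lemma rnk_less: "loc_le M f g \<Longrightarrow> f \<noteq> g \<Longrightarrow> g \<in> evs_of M B \<Longrightarrow> rnk M B f < rnk M B g"
proof -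
  assume a: "loc_le M f g" "f \<noteq> g" "g \<in> evs_of M B"
  have "{h \<in> evs_of M B. loc_le M h f} \<subset> {h \<in> evs_of M B. loc_le M h g}"
  proof
    show "{h \<in> evs_of M B. loc_le M h f} \<subseteq> {h \<in> evs_of M B. loc_le M h g}"
      using a loc_le_trans by blast
    have "g \<in> {h \<in> evs_of M B. loc_le M h g}" using a loc_le_refl unfolding evs_of_def by auto
    moreover have "g \<notin> {h \<in> evs_of M B. loc_le M h f}" using a loc_antisym by blast
    ultimately show "{h \<in> evs_of M B. loc_le M h f} \<noteq> {h \<in> evs_of M B. loc_le M h g}" by blast
  qed
  then show ?thesis unfolding rnk_def using fin_evs psubset_card_mono
    by (metis (no_types, lifting) finite_subset mem_Collect_eq subsetI)
qed

lemma kth_rnk: "m \<in> evs_of M B \<Longrightarrow> kth M B (rnk M B m) = m"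
  unfolding kth_def
proof (rule the_equality)
  assume m: "m \<in> evs_of M B"
  show "m \<in> evs_of M B \<and> card {g \<in> evs_of M B. loc_le M g m} = rnk M B m" using m by (simp add: rnk_def)
  fix f assume f: "f \<in> evs_of M B \<and> card {g \<in> evs_of M B. loc_le M g f} = rnk M B m"
  then have eq: "rnk M B f = rnk M B m" by (simp add: rnk_def)
  show "f = m"
  proof (rule ccontr)
    assume ne: "f \<noteq> m"
    have "loc_le M f m \<or> loc_le M m f" using loc_total f m by blast
    then show False using rnk_less ne eq f m by (metis less_irrefl)
  qed
qed

lemma max_ex: "finite S \<Longrightarrow> S \<noteq> {} \<Longrightarrow> S \<subseteq> evs_of M B \<Longrightarrow> \<exists>m\<in>S. \<forall>g\<in>S. loc_le M g m"
proof -
  assume a: "finite S" "S \<noteq> {}" "S \<subseteq> evs_of M B"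
  have "Max (rnk M B ` S) \<in> rnk M B ` S" using a by simp
  then obtain m where m: "m \<in> S" "rnk M B m = Max (rnk M B ` S)" by auto
  have "\<forall>g\<in>S. loc_le M g m"
  proof
    fix g assume g: "g \<in> S"
    have le: "rnk M B g \<le> rnk M B m" using m a g by simp
    have "loc_le M g m \<or> loc_le M m g" using loc_total g m a by blast
    then show "loc_le M g m" using rnk_less[of m g B] le g a by force
  qed
  then show ?thesis using m by blast
qed

lemma down_kth:
  assumes "S \<subseteq> evs_of M B" "\<forall>f\<in>S. \<forall>g\<in>evs_of M B. loc_le M g f \<longrightarrow> g \<in> S"
    "m \<in> S" "\<forall>g\<in>S. loc_le M g m"
  shows "card S = rnk M B m \<and> kth M B (card S) = m"
proof -
  have "S = {g \<in> evs_of M B. loc_le M g m}" using assms by blast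
  then have "card S = rnk M B m" by (simp add: rnk_def)
  then show ?thesis using kth_rnk assms by auto
qed

lemma Dset_sub: "Dset M x B \<subseteq> evs_of M B" unfolding Dset_def by auto

lemma Dset_fin: "finite (Dset M x B)" using Dset_sub fin_evs finite_subset by blast

lemma Dset_down: "\<forall>f\<in>Dset M x B. \<forall>g\<in>evs_of M B. loc_le M g f \<longrightarrow> g \<in> Dset M x B"
  unfolding Dset_def using loc_causal causal_trans by blast

lemma last_of_eq: "last_of M B x = (if card (Dset M x B) = 0 then None else Some (kth M B (card (Dset M x B))))"
proof (cases "Dset M x B = {}")
  case True
  have S: "{f \<in> evs_of M B. causal_le M f x} = Dset M x B" by (simp add: Dset_def)
  show ?thesis unfolding last_of_def Let_def S using True by simp
next
  case False
  obtain m where m: "m \<in> Dset M x B" "\<forall>g\<in>Dset M x B. loc_le M g m"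
    using max_ex[OF Dset_fin False Dset_sub] by blast
  have k: "card (Dset M x B) = rnk M B m \<and> kth M B (card (Dset M x B)) = m"
    using down_kth[OF Dset_sub Dset_down m] .
  have c: "card (Dset M x B) \<noteq> 0" using False Dset_fin by simp
  have "(THE f. f \<in> Dset M x B \<and> (\<forall>g\<in>Dset M x B. loc_le M g f)) = m"
    using m loc_antisym by (intro the_equality) blast+
  moreover have S: "{f \<in> evs_of M B. causal_le M f x} = Dset M x B" by (simp add: Dset_def)
  ultimately show ?thesis using False c k unfolding last_of_def Let_def S by metis
qed

lemma kth_self: "e \<in> ev M \<Longrightarrow> card (Dset M e (pid M e)) \<noteq> 0 \<and> kth M (pid M e) (card (Dset M e (pid M e))) = e"
proof -
  assume e: "e \<in> ev M"
  have m: "e \<in> Dset M e (pid M e)" using e causal_refl unfolding Dset_def evs_of_def by auto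
  have "\<forall>g\<in>Dset M e (pid M e). loc_le M g e" using causal_same_loc unfolding Dset_def evs_of_def by auto
  then have "kth M (pid M e) (card (Dset M e (pid M e))) = e" using down_kth[OF Dset_sub Dset_down m] by blast
  moreover have "card (Dset M e (pid M e)) \<noteq> 0" using m Dset_fin by (metis card_0_eq empty_iff)
  ultimately show ?thesis by blast
qed

lemma last_loc_cases: "e \<in> ev M \<Longrightarrow> (last_loc M e = None \<and> \<not>(\<exists>f. loc_less M f e))
   \<or> (\<exists>p. last_loc M e = Some p \<and> loc_less M p e \<and> (\<forall>g. loc_less M g e \<longrightarrow> loc_le M g p))"
proof -
  assume e: "e \<in> ev M"
  show ?thesis
  proof (cases "\<exists>f. loc_less M f e")
    case False then show ?thesis unfolding last_loc_def by simp
  next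
    case True
    let ?S = "{f. loc_less M f e}"
    have sub: "?S \<subseteq> evs_of M (pid M e)" unfolding loc_less_def loc_le_def evs_of_def by auto
    then have "finite ?S" using fin_evs finite_subset by blast
    then obtain p where p: "p \<in> ?S" "\<forall>g\<in>?S. loc_le M g p" using max_ex[OF _ _ sub] True by blast
    have "(THE f. loc_less M f e \<and> (\<forall>g. loc_less M g e \<longrightarrow> loc_le M g f)) = p"
      using p loc_antisym unfolding loc_less_def by (intro the_equality) blast+
    then show ?thesis using True p unfolding last_loc_def by auto
  qed
qed

lemma sat_since: "e \<in> ev M \<Longrightarrow> sat M I e (Since a b) =
   (sat M I e b \<or> (sat M I e a \<and> (\<exists>p. last_loc M e = Some p \<and> sat M I p (Since a b))))"
proof -
  assume e: "e \<in> ev M"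
  have ee: "loc_le M e e" using e loc_le_refl by blast
  from last_loc_cases[OF e] show ?thesis
  proof
    assume N: "last_loc M e = None \<and> \<not>(\<exists>f. loc_less M f e)"
    have fe: "\<And>f. loc_le M f e \<Longrightarrow> f = e" using N unfolding loc_less_def by blast
    have "sat M I e (Since a b) = sat M I e b"
    proof
      assume "sat M I e (Since a b)" then obtain f where "loc_le M f e" "sat M I f b" by auto
      then show "sat M I e b" using fe by metis
    next
      assume "sat M I e b"
      moreover have "\<forall>g. loc_less M e g \<and> loc_le M g e \<longrightarrow> sat M I g a"
        using loc_antisym unfolding loc_less_def by blast
      ultimately show "sat M I e (Since a b)" using ee by auto
    qed
    then show ?thesis using N by simp
  next
    assume "\<exists>p. last_loc M e = Some p \<and> loc_less M p e \<and> (\<forall>g. loc_less M g e \<longrightarrow> loc_le M g p)"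
    then obtain p where p: "last_loc M e = Some p" "loc_less M p e" "\<forall>g. loc_less M g e \<longrightarrow> loc_le M g p" by blast
    have pe: "loc_le M p e" using p unfolding loc_less_def by blast
    show ?thesis
    proof
      assume "sat M I e (Since a b)"
      then obtain f where f: "loc_le M f e" "sat M I f b" "\<forall>g. loc_less M f g \<and> loc_le M g e \<longrightarrow> sat M I g a"
        by auto
      show "sat M I e b \<or> (sat M I e a \<and> (\<exists>p. last_loc M e = Some p \<and> sat M I p (Since a b)))"
      proof (cases "f = e")
        case True then show ?thesis using f by simp
      next
        case False
        then have fp: "loc_le M f p" using p f unfolding loc_less_def by blast
        have "sat M I e a" using f False ee unfolding loc_less_def by blast
        moreover have "sat M I p (Since a b)"
          using fp f pe loc_le_trans by auto
        ultimately show ?thesis using p by blast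
      qed
    next
      assume "sat M I e b \<or> (sat M I e a \<and> (\<exists>p. last_loc M e = Some p \<and> sat M I p (Since a b)))"
      then show "sat M I e (Since a b)"
      proof
        assume "sat M I e b"
        moreover have "\<forall>g. loc_less M e g \<and> loc_le M g e \<longrightarrow> sat M I g a"
          using loc_antisym unfolding loc_less_def by blast
        ultimately show ?thesis using ee by auto
      next
        assume "sat M I e a \<and> (\<exists>p. last_loc M e = Some p \<and> sat M I p (Since a b))"
        then have ea: "sat M I e a" and sp: "sat M I p (Since a b)" using p by auto
        from sp obtain f where f: "loc_le M f p" "sat M I f b" "\<forall>g. loc_less M f g \<and> loc_le M g p \<longrightarrow> sat M I g a"
          by auto
        have "loc_le M f e" using f pe loc_le_trans by blast
        moreover have "\<forall>g. loc_less M f g \<and> loc_le M g e \<longrightarrow> sat M I g a"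
        proof (intro allI impI)
          fix g assume g: "loc_less M f g \<and> loc_le M g e"
          show "sat M I g a"
          proof (cases "g = e")
            case True then show ?thesis using ea by simp
          next
            case False then have "loc_le M g p" using p g unfolding loc_less_def by blast
            then show ?thesis using f g by blast
          qed
        qed
        ultimately show ?thesis using f by auto
      qed
    qed
  qed
qed


lemma past: "n < length xs \<Longrightarrow> causal_le M f (xs ! n) \<Longrightarrow> f \<noteq> xs ! n \<Longrightarrow> f \<in> set (take n xs)"
proof -
  assume a: "n < length xs" "causal_le M f (xs ! n)" "f \<noteq> xs ! n"
  obtain j where j: "j < length xs" "xs ! j = f" using idx causal_ev a by blast
  have "j \<le> n" using causal_idx a j by blast
  then have "j < n" using a j by (cases "j = n") auto
  then show ?thesis using j by (metis in_set_conv_nth length_take min.absorb4 min_less_iff_conj nth_take)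
qed

lemma fut: "n < length xs \<Longrightarrow> f \<in> set (take n xs) \<Longrightarrow> \<not> causal_le M (xs ! n) f"
proof
  assume a: "n < length xs" "f \<in> set (take n xs)" "causal_le M (xs ! n) f"
  then obtain j where j: "j < n" "xs ! j = f" by (auto simp: in_set_conv_nth)
  have "n \<le> j" using causal_idx a j by (metis order.strict_trans)
  then show False using j by simp
qed

lemma decomp: "e \<in> ev M \<Longrightarrow> {f \<in> evs_of M B. causal_le M f e \<and> f \<noteq> e} =
   (case last_loc M e of None \<Rightarrow> {} | Some p \<Rightarrow> Dset M p B) \<union>
   (if kind M e = Recv then Dset M (THE s. msg M s e) B else {})"
proof -
  assume e: "e \<in> ev M"
  show ?thesis
  proof (intro equalityI subsetI)
    fix f assume f: "f \<in> {f \<in> evs_of M B. causal_le M f e \<and> f \<noteq> e}"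
    then have "(f, e) \<in> {(a, b). nxt M a b \<or> msg M a b}\<^sup>*" "f \<noteq> e" unfolding causal_le_def by auto
    then obtain g where g: "(f, g) \<in> {(a, b). nxt M a b \<or> msg M a b}\<^sup>*" "nxt M g e \<or> msg M g e"
      by (metis (no_types, lifting) case_prodD mem_Collect_eq rtranclE)
    have gE: "g \<in> ev M" using g nxtD msgD by blast
    have fg: "causal_le M f g" using g gE f unfolding causal_le_def evs_of_def by auto
    from g(2) show "f \<in> (case last_loc M e of None \<Rightarrow> {} | Some p \<Rightarrow> Dset M p B) \<union>
      (if kind M e = Recv then Dset M (THE s. msg M s e) B else {})"
    proof
      assume n: "nxt M g e"
      then have gl: "loc_less M g e" using nxt_loc_less by blast
      then obtain p where p: "last_loc M e = Some p" "loc_le M g p"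
        using last_loc_cases[OF e] by blast
      then have "causal_le M f p" using fg loc_causal causal_trans by blast
      then show ?thesis using p f unfolding Dset_def by auto
    next
      assume m: "msg M g e"
      then have k: "kind M e = Recv" using msgD by blast
      have "(THE s. msg M s e) = g" using m recv_ex[OF e k] by blast
      then show ?thesis using k fg f unfolding Dset_def by auto
    qed
  next
    fix f assume f: "f \<in> (case last_loc M e of None \<Rightarrow> {} | Some p \<Rightarrow> Dset M p B) \<union>
      (if kind M e = Recv then Dset M (THE s. msg M s e) B else {})"
    then show "f \<in> {f \<in> evs_of M B. causal_le M f e \<and> f \<noteq> e}"
    proof
      assume f1: "f \<in> (case last_loc M e of None \<Rightarrow> {} | Some p \<Rightarrow> Dset M p B)"
      then obtain p where p: "last_loc M e = Some p" "f \<in> Dset M p B" by (cases "last_loc M e") auto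
      have pl: "loc_less M p e" using p last_loc_cases[OF e] by auto
      then have pe: "causal_le M p e" "p \<noteq> e" using loc_causal unfolding loc_less_def by auto
      have fp: "causal_le M f p" "f \<in> evs_of M B" using p unfolding Dset_def by auto
      have "causal_le M f e" using fp pe causal_trans by blast
      moreover have "f \<noteq> e" using fp pe causal_antisym by blast
      ultimately show ?thesis using fp by blast
    next
      assume f2: "f \<in> (if kind M e = Recv then Dset M (THE s. msg M s e) B else {})"
      then have k: "kind M e = Recv" by (cases "kind M e = Recv") auto
      let ?s = "THE s. msg M s e"
      have m: "msg M ?s e" using recv_ex[OF e k] by (metis theI)
      have se: "causal_le M ?s e" using m msgD unfolding causal_le_def by (auto intro: r_into_rtrancl)
      have fs: "causal_le M f ?s" "f \<in> evs_of M B" using f2 k unfolding Dset_def by auto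
      have "causal_le M f e" using fs se causal_trans by blast
      moreover have "f \<noteq> e"
      proof
        assume "f = e" then have "?s = e" using fs se causal_antisym by simp
        then show False using m msgD by fastforce
      qed
      ultimately show ?thesis using fs by blast
    qed
  qed
qed

lemma down_union:
  assumes "S \<subseteq> evs_of M B" "\<forall>f\<in>S. \<forall>g\<in>evs_of M B. loc_le M g f \<longrightarrow> g \<in> S"
    "T \<subseteq> evs_of M B" "\<forall>f\<in>T. \<forall>g\<in>evs_of M B. loc_le M g f \<longrightarrow> g \<in> T"
  shows "card (S \<union> T) = max (card S) (card T)"
proof -
  have "S \<subseteq> T \<or> T \<subseteq> S"
  proof (rule ccontr)
    assume "\<not> (S \<subseteq> T \<or> T \<subseteq> S)"
    then obtain x y where "x \<in> S" "x \<notin> T" "y \<in> T" "y \<notin> S" by blast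
    then show False using loc_total[of x B y] assms by blast
  qed
  moreover have "finite S" "finite T" using assms fin_evs finite_subset by blast+
  ultimately show ?thesis by (metis card_mono max.absorb1 max.absorb2 sup.absorb1 sup.absorb2)
qed

lemma local_eval:
  assumes e: "e \<in> ev M" and A: "pid M e = A"
  and vcA: "vc s A > 1 \<longleftrightarrow> (\<exists>p. last_loc M e = Some p)"
  and oldA: "\<forall>\<psi>\<in>sub \<Phi>. old s \<psi> = (case last_loc M e of None \<Rightarrow> False | Some p \<Rightarrow> sat M I p \<psi>)"
  and vcB: "\<forall>B. B \<noteq> A \<longrightarrow> vc s B = card (Dset M e B)"
  and viewB: "\<forall>B. B \<noteq> A \<longrightarrow> vc s B > 0 \<longrightarrow> (\<forall>\<psi>\<in>sub \<Phi>. view s (B, \<psi>) = Some (sat M I (kth M B (vc s B)) \<psi>))"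
  and varB: "\<forall>B. B \<noteq> A \<longrightarrow> vc s B > 0 \<longrightarrow> (\<forall>x\<in>Vars \<Phi>. var s (B, x) = Some (val M (kth M B (vc s B)) x))"
  and var0: "\<forall>B. B \<noteq> A \<longrightarrow> vc s B = 0 \<longrightarrow> (\<forall>x. var s (B, x) = None)"
  and varA: "\<forall>x\<in>Vars \<Phi>. var s (A, x) = Some (val M e x)"
  and st: "store s = val M e"
  shows "\<psi> \<in> sub \<Phi> \<Longrightarrow> Eval I A s \<psi> = sat M I e \<psi>"
proof (induction \<psi>)
  case (Atom p ts)
  have "map (ateval s) ts = map (teval M e) ts"
  proof (rule map_cong)
    fix t assume t: "t \<in> set ts"
    show "ateval s t = teval M e t"
    proof (cases t)
      case (LVar x) then show ?thesis using st by simp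
    next
      case (RVar B x)
      have x: "x \<in> Vars \<Phi>" using atom_vars[OF Atom, of B x] t RVar by simp
      show ?thesis
      proof (cases "B = A")
        case True
        then show ?thesis using RVar x varA kth_self[OF e] last_of_eq[of B e] A by simp
      next
        case False
        then show ?thesis using RVar x varB var0 vcB last_of_eq[of B e] by (cases "vc s B = 0") auto
      qed
    qed
  qed simp
  then have "those (map (ateval s) ts) = those (map (teval M e) ts)" by (rule arg_cong)
  then show ?case by simp
next
  case (At B \<theta>)
  have th: "\<theta> \<in> sub \<Phi>" using sub_closed[OF At.prems] by (auto simp: subf_self)
  show ?case
  proof (cases "B = A")
    case True
    then show ?thesis using At th kth_self[OF e] last_of_eq[of B e] A by simp
  next
    case False
    then show ?thesis using th viewB vcB last_of_eq[of B e] by (cases "vc s B = 0") auto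
  qed
next
  case (Y \<theta>)
  have th: "\<theta> \<in> sub \<Phi>" using sub_closed[OF Y.prems] by (auto simp: subf_self)
  then show ?case using vcA oldA by (cases "last_loc M e") auto
next
  case (Since \<theta>1 \<theta>2)
  have th: "\<theta>1 \<in> sub \<Phi>" "\<theta>2 \<in> sub \<Phi>" using sub_closed[OF Since.prems] by (auto simp: subf_self)
  have "Eval I A s (Since \<theta>1 \<theta>2) = (sat M I e \<theta>2 \<or> (sat M I e \<theta>1 \<and> vc s A > 1 \<and> old s (Since \<theta>1 \<theta>2)))"
    using Since th by simp
  also have "\<dots> = sat M I e (Since \<theta>1 \<theta>2)"
    using sat_since[OF e, of I \<theta>1 \<theta>2] vcA oldA Since.prems by (cases "last_loc M e") auto
  finally show ?case .
next
  case (Conj \<theta>1 \<theta>2)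
  have th: "\<theta>1 \<in> sub \<Phi>" "\<theta>2 \<in> sub \<Phi>" using sub_closed[OF Conj.prems] by (auto simp: subf_self)
  then show ?case using Conj by simp
next
  case (Disj \<theta>1 \<theta>2)
  have th: "\<theta>1 \<in> sub \<Phi>" "\<theta>2 \<in> sub \<Phi>" using sub_closed[OF Disj.prems] by (auto simp: subf_self)
  then show ?case using Disj by simp
next
  case (Neg \<theta>)
  have th: "\<theta> \<in> sub \<Phi>" using sub_closed[OF Neg.prems] by (auto simp: subf_self)
  then show ?case using Neg by simp
qed


end

definition goodS :: "('e, 'l, 'v, 'd) msc \<Rightarrow> ('l, 'v, 'p) cpl set \<Rightarrow> ('p \<Rightarrow> 'd list \<Rightarrow> bool)
  \<Rightarrow> ('l \<Rightarrow> nat) \<Rightarrow> ('l \<Rightarrow> nat) \<Rightarrow> ('l \<times> ('l, 'v, 'p) cpl \<Rightarrow> bool option) \<Rightarrow> ('l \<times> 'v \<Rightarrow> 'd option) \<Rightarrow> bool" where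
  "goodS M \<Phi> I K vcf viewf varf \<longleftrightarrow> (\<forall>B. vcf B = K B
     \<and> (K B = 0 \<longrightarrow> (\<forall>x. varf (B, x) = None) \<and> (\<forall>\<psi>. viewf (B, \<psi>) = None))
     \<and> (K B > 0 \<longrightarrow> (\<forall>x\<in>Vars \<Phi>. varf (B, x) = Some (val M (kth M B (K B)) x)))
     \<and> (K B > 0 \<longrightarrow> (\<forall>\<psi>\<in>sub \<Phi>. viewf (B, \<psi>) = Some (sat M I (kth M B (K B)) \<psi>))))"

lemma goodS_merge:
  assumes "goodS M \<Phi> I K (vc s) (view s) (var s)" "goodS M \<Phi> I K' (mvc \<mu>) (mview \<mu>) (mvar \<mu>)"
  shows "goodS M \<Phi> I (\<lambda>B. max (K B) (K' B)) (vc (recv_update \<mu> s)) (view (recv_update \<mu> s)) (var (recv_update \<mu> s))"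
  unfolding goodS_def
proof
  fix B
  show "vc (recv_update \<mu> s) B = max (K B) (K' B) \<and>
         (max (K B) (K' B) = 0 \<longrightarrow> (\<forall>x. var (recv_update \<mu> s) (B, x) = None) \<and> (\<forall>\<psi>. view (recv_update \<mu> s) (B, \<psi>) = None)) \<and>
         (0 < max (K B) (K' B) \<longrightarrow> (\<forall>x\<in>Vars \<Phi>. var (recv_update \<mu> s) (B, x) = Some (val M (kth M B (max (K B) (K' B))) x))) \<and>
         (0 < max (K B) (K' B) \<longrightarrow> (\<forall>\<psi>\<in>sub \<Phi>. view (recv_update \<mu> s) (B, \<psi>) = Some (sat M I (kth M B (max (K B) (K' B))) \<psi>)))"
    using assms unfolding goodS_def recv_update_def
    by (cases "K' B > K B") (auto simp: max_def)
qed

locale setting2 = setting M xs for M :: "('e, 'l, 'v, 'd) msc" and xs +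
  fixes \<Phi> :: "('l, 'v, 'p) cpl set" and I :: "'p \<Rightarrow> 'd list \<Rightarrow> bool"
    and eff :: "'e \<Rightarrow> ('v \<Rightarrow> 'd) \<Rightarrow> ('v \<Rightarrow> 'd)" and \<sigma>0 :: "'l \<Rightarrow> ('v \<Rightarrow> 'd)"
  assumes vi: "val_induced M eff \<sigma>0"
begin

definition Inv :: "nat \<Rightarrow> ('e, 'l, 'v, 'd, 'p) gstate \<Rightarrow> bool" where
  "Inv n g \<longleftrightarrow>
   (\<forall>C. (evs_of M C \<inter> set (take n xs) = {} \<longrightarrow> vc (fst g C) = (\<lambda>_. 0) \<and> view (fst g C) = (\<lambda>_. None)
            \<and> var (fst g C) = (\<lambda>_. None) \<and> store (fst g C) = \<sigma>0 C)
      \<and> (\<forall>p\<in>evs_of M C \<inter> set (take n xs). (\<forall>f\<in>evs_of M C \<inter> set (take n xs). loc_le M f p) \<longrightarrow>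
            goodS M \<Phi> I (\<lambda>B. card (Dset M p B)) (vc (fst g C)) (view (fst g C)) (var (fst g C))
            \<and> store (fst g C) = val M p))
 \<and> (\<forall>s\<in>set (take n xs). \<forall>B. kind M s = Send B \<longrightarrow>
       (\<exists>\<mu>. snd g s = Some \<mu> \<and> goodS M \<Phi> I (\<lambda>B. card (Dset M s B)) (mvc \<mu>) (mview \<mu>) (mvar \<mu>)))"

lemma Inv0: "Inv 0 (init_state \<sigma>0)"
  unfolding Inv_def init_state_def by simp


lemma step:
  assumes n: "n < length xs" and inv: "Inv n g"
  shows "Inv (Suc n) (gstep M \<Phi> I eff g (xs ! n)) \<and>
     goodS M \<Phi> I (\<lambda>B. card (Dset M (xs ! n) B)) (vc (fst (gstep M \<Phi> I eff g (xs ! n)) (pid M (xs ! n))))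
        (view (fst (gstep M \<Phi> I eff g (xs ! n)) (pid M (xs ! n))))
        (var (fst (gstep M \<Phi> I eff g (xs ! n)) (pid M (xs ! n))))"
proof -
  define e where "e = xs ! n"
  define A where "A = pid M e"
  define P where "P = set (take n xs)"
  define L where "L = fst g"
  define mb where "mb = snd g"
  have eE: "e \<in> ev M" using n lin unfolding e_def lin_ext_def by auto
  have eA: "e \<in> evs_of M A" using eE unfolding A_def evs_of_def by simp
  have P': "set (take (Suc n) xs) = insert e P" unfolding P_def e_def using n
    by (simp add: take_Suc_conv_app_nth)
  have eP: "e \<notin> P" using fut[OF n] causal_refl[OF eE] unfolding P_def e_def by blast
  have PA: "\<And>f. f \<in> evs_of M A \<inter> P \<longleftrightarrow> loc_less M f e"
  proof
    fix f assume f: "f \<in> evs_of M A \<inter> P"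
    have "loc_le M f e \<or> loc_le M e f" using loc_total f eA by blast
    moreover have "\<not> causal_le M e f" using fut[OF n] f unfolding P_def e_def by blast
    ultimately show "loc_less M f e" using loc_causal f eP unfolding loc_less_def by blast
  next
    fix f assume f: "loc_less M f e"
    then have "causal_le M f e" "f \<noteq> e" using loc_causal unfolding loc_less_def by auto
    then have "f \<in> P" using past[OF n] unfolding P_def e_def by blast
    moreover have "f \<in> evs_of M A" using f loc_leD unfolding loc_less_def evs_of_def A_def by auto
    ultimately show "f \<in> evs_of M A \<inter> P" by blast
  qed
  define K0 where "K0 = (\<lambda>B. case last_loc M e of None \<Rightarrow> 0 | Some p \<Rightarrow> card (Dset M p B))"
  define st0 where "st0 = (case last_loc M e of None \<Rightarrow> \<sigma>0 A | Some p \<Rightarrow> val M p)"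
  have G0: "goodS M \<Phi> I K0 (vc (L A)) (view (L A)) (var (L A)) \<and> store (L A) = st0"
  proof (cases "last_loc M e")
    case None
    then have "\<not> (\<exists>f. loc_less M f e)" using last_loc_cases[OF eE] by auto
    then have "evs_of M A \<inter> P = {}" using PA by blast
    then show ?thesis using inv None unfolding Inv_def P_def L_def K0_def st0_def goodS_def by auto
  next
    case (Some p)
    then have p: "loc_less M p e" "\<forall>g. loc_less M g e \<longrightarrow> loc_le M g p" using last_loc_cases[OF eE] by auto
    then have "p \<in> evs_of M A \<inter> P" "\<forall>f\<in>evs_of M A \<inter> P. loc_le M f p" using PA by auto
    then show ?thesis using inv Some unfolding Inv_def P_def L_def K0_def st0_def by auto
  qed
  define s1 where "s1 = (if kind M e = Recv
           then (case mb (THE s. msg M s e) of Some \<mu> \<Rightarrow> recv_update \<mu> (L A) | None \<Rightarrow> L A)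
           else L A)"
  define K1 where "K1 = (\<lambda>B. card {f \<in> evs_of M B. causal_le M f e \<and> f \<noteq> e})"
  define X where "X = (\<lambda>B. case last_loc M e of None \<Rightarrow> {} | Some p \<Rightarrow> Dset M p B)"
  have Xd: "\<And>B. X B \<subseteq> evs_of M B \<and> (\<forall>f\<in>X B. \<forall>g\<in>evs_of M B. loc_le M g f \<longrightarrow> g \<in> X B)"
    unfolding X_def using Dset_sub Dset_down by (auto split: option.splits)
  have XK: "\<And>B. card (X B) = K0 B" unfolding X_def K0_def by (auto split: option.splits)
  have G1: "goodS M \<Phi> I K1 (vc s1) (view s1) (var s1) \<and> store s1 = st0"
  proof (cases "kind M e = Recv")
    case True
    define sd where "sd = (THE s. msg M s e)"
    have m: "msg M sd e" using recv_ex[OF eE True] unfolding sd_def by (metis theI)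
    have sde: "causal_le M sd e" using m msgD unfolding causal_le_def by (auto intro: r_into_rtrancl)
    have "sd \<noteq> e" using m msgD by blast
    then have sdP: "sd \<in> P" using past[OF n] sde unfolding P_def e_def by blast
    have ks: "kind M sd = Send A" using m msgD unfolding A_def by blast
    obtain \<mu> where mu: "mb sd = Some \<mu>" "goodS M \<Phi> I (\<lambda>B. card (Dset M sd B)) (mvc \<mu>) (mview \<mu>) (mvar \<mu>)"
      using inv sdP ks unfolding Inv_def P_def mb_def by blast
    have s1e: "s1 = recv_update \<mu> (L A)" unfolding s1_def using True mu sd_def by simp
    have "K1 = (\<lambda>B. max (K0 B) (card (Dset M sd B)))"
    proof
      fix B
      have "K1 B = card (X B \<union> Dset M sd B)" unfolding K1_def decomp[OF eE] X_def sd_def using True by simp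
      also have "\<dots> = max (card (X B)) (card (Dset M sd B))"
        using down_union[OF conjunct1[OF Xd] conjunct2[OF Xd] Dset_sub Dset_down] .
      finally show "K1 B = max (K0 B) (card (Dset M sd B))" using XK by simp
    qed
    then show ?thesis using goodS_merge[OF conjunct1[OF G0] mu(2)] G0 s1e by (simp add: recv_update_def)
  next
    case False
    have "K1 = K0"
    proof
      fix B
      show "K1 B = K0 B" unfolding K1_def decomp[OF eE] using False XK[of B] unfolding X_def by simp
    qed
    then show ?thesis using G0 False unfolding s1_def by simp
  qed
  have vc1: "\<And>B. vc s1 B = K1 B" using G1 unfolding goodS_def by blast
  define SA where "SA = {f \<in> evs_of M A. causal_le M f e \<and> f \<noteq> e}"
  have SAl: "SA = {f. loc_less M f e}"
  proof (intro equalityI subsetI)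
    fix f assume "f \<in> SA"
    then show "f \<in> {f. loc_less M f e}" using causal_same_loc unfolding SA_def loc_less_def evs_of_def A_def by auto
  next
    fix f assume "f \<in> {f. loc_less M f e}"
    then show "f \<in> SA" using loc_causal loc_leD unfolding SA_def loc_less_def evs_of_def A_def by auto
  qed
  have finSA: "finite SA" unfolding SA_def using fin_evs by simp
  have K1A: "K1 A = card SA" unfolding K1_def SA_def by simp
  have DeA: "card (Dset M e A) = Suc (K1 A)"
  proof -
    have "Dset M e A = insert e SA" unfolding Dset_def SA_def using eA causal_refl[OF eE] by auto
    then show ?thesis using finSA K1A unfolding SA_def by simp
  qed
  have K1B: "\<And>B. B \<noteq> A \<Longrightarrow> K1 B = card (Dset M e B)"
  proof -
    fix B assume "B \<noteq> A"
    then have "{f \<in> evs_of M B. causal_le M f e \<and> f \<noteq> e} = Dset M e B"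
      unfolding Dset_def evs_of_def A_def by auto
    then show "K1 B = card (Dset M e B)" unfolding K1_def by simp
  qed
  have K1A0: "K1 A = 0 \<longleftrightarrow> last_loc M e = None"
    using last_loc_cases[OF eE] K1A SAl finSA by auto
  have K1Ak: "\<And>p. last_loc M e = Some p \<Longrightarrow> kth M A (K1 A) = p"
  proof -
    fix p assume "last_loc M e = Some p"
    then have p: "loc_less M p e" "\<forall>g. loc_less M g e \<longrightarrow> loc_le M g p" using last_loc_cases[OF eE] by auto
    have sub: "SA \<subseteq> evs_of M A" unfolding SA_def by auto
    have dn: "\<forall>f\<in>SA. \<forall>g\<in>evs_of M A. loc_le M g f \<longrightarrow> g \<in> SA"
    proof (intro ballI impI)
      fix f g assume a: "f \<in> SA" "g \<in> evs_of M A" "loc_le M g f"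
      then have "loc_less M f e" using SAl by blast
      then have "loc_le M g e" "g \<noteq> e" using a loc_le_trans loc_antisym unfolding loc_less_def by blast+
      then show "g \<in> SA" using SAl unfolding loc_less_def by blast
    qed
    have "card SA = rnk M A p \<and> kth M A (card SA) = p"
      using down_kth[OF sub dn] p SAl by blast
    then show "kth M A (K1 A) = p" using K1A by metis
  qed
  define s2 where "s2 = s1\<lparr>old := (\<lambda>\<psi>. view s1 (A, \<psi>) = Some True)\<rparr>"
  define s3 where "s3 = s2\<lparr>vc := (vc s2)(A := Suc (vc s2 A)),
     store := eff e (store s2),
     var := (\<lambda>(B, x). if B = A \<and> x \<in> Vars \<Phi> then Some (eff e (store s2) x) else var s2 (B, x))\<rparr>"
  define s where "s = local_step \<Phi> I eff A e s1"
  have sdef: "s = s3\<lparr>view := (\<lambda>(B, \<psi>). if B = A \<and> \<psi> \<in> sub \<Phi> then Some (Eval I A s3 \<psi>) else view s3 (B, \<psi>))\<rparr>"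
    unfolding s_def local_step_def Let_def s3_def s2_def by (rule refl)
  have effv: "eff e (store s1) = val M e"
    using vi eE G1 unfolding val_induced_def st0_def A_def by auto
  have EV: "\<And>\<psi>. \<psi> \<in> sub \<Phi> \<Longrightarrow> Eval I A s3 \<psi> = sat M I e \<psi>"
  proof (rule local_eval[OF eE A_def[symmetric]])
    show "1 < vc s3 A \<longleftrightarrow> (\<exists>p. last_loc M e = Some p)" unfolding s3_def s2_def using vc1 K1A0 by auto
    show "\<forall>\<psi>\<in>sub \<Phi>. old s3 \<psi> = (case last_loc M e of None \<Rightarrow> False | Some p \<Rightarrow> sat M I p \<psi>)"
    proof
      fix \<psi> assume ps: "\<psi> \<in> sub \<Phi>"
      show "old s3 \<psi> = (case last_loc M e of None \<Rightarrow> False | Some p \<Rightarrow> sat M I p \<psi>)"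
      proof (cases "last_loc M e")
        case None
        then show ?thesis using K1A0 G1 unfolding s3_def s2_def goodS_def by simp
      next
        case (Some p)
        then have "K1 A > 0" using K1A0 by simp
        then show ?thesis using K1Ak[OF Some] G1 ps Some unfolding s3_def s2_def goodS_def by simp
      qed
    qed
    show "\<forall>B. B \<noteq> A \<longrightarrow> vc s3 B = card (Dset M e B)" unfolding s3_def s2_def using vc1 K1B by simp
    show "\<forall>B. B \<noteq> A \<longrightarrow> vc s3 B > 0 \<longrightarrow> (\<forall>\<psi>\<in>sub \<Phi>. view s3 (B, \<psi>) = Some (sat M I (kth M B (vc s3 B)) \<psi>))"
      unfolding s3_def s2_def using G1 vc1 unfolding goodS_def by simp
    show "\<forall>B. B \<noteq> A \<longrightarrow> vc s3 B > 0 \<longrightarrow> (\<forall>x\<in>Vars \<Phi>. var s3 (B, x) = Some (val M (kth M B (vc s3 B)) x))"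
      unfolding s3_def s2_def using G1 vc1 unfolding goodS_def by simp
    show "\<forall>B. B \<noteq> A \<longrightarrow> vc s3 B = 0 \<longrightarrow> (\<forall>x. var s3 (B, x) = None)"
      unfolding s3_def s2_def using G1 vc1 unfolding goodS_def by simp
    show "\<forall>x\<in>Vars \<Phi>. var s3 (A, x) = Some (val M e x)" unfolding s3_def s2_def using effv by simp
    show "store s3 = val M e" unfolding s3_def s2_def using effv by simp
  qed
  have ke: "kth M A (card (Dset M e A)) = e" "card (Dset M e A) \<noteq> 0" using kth_self[OF eE] unfolding A_def by auto
  have GS: "goodS M \<Phi> I (\<lambda>B. card (Dset M e B)) (vc s) (view s) (var s)"
    unfolding goodS_def
  proof
    fix B
    show "vc s B = card (Dset M e B) \<and>
         (card (Dset M e B) = 0 \<longrightarrow> (\<forall>x. var s (B, x) = None) \<and> (\<forall>\<psi>. view s (B, \<psi>) = None)) \<and>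
         (0 < card (Dset M e B) \<longrightarrow> (\<forall>x\<in>Vars \<Phi>. var s (B, x) = Some (val M (kth M B (card (Dset M e B))) x))) \<and>
         (0 < card (Dset M e B) \<longrightarrow> (\<forall>\<psi>\<in>sub \<Phi>. view s (B, \<psi>) = Some (sat M I (kth M B (card (Dset M e B))) \<psi>)))"
    proof (cases "B = A")
      case True
      then show ?thesis using DeA vc1 ke EV effv unfolding sdef s3_def s2_def by simp
    next
      case False
      then show ?thesis using G1 vc1 K1B[OF False] unfolding sdef s3_def s2_def goodS_def by simp
    qed
  qed
  define mb' where "mb' = (case kind M e of
              Send B \<Rightarrow> mb(e := Some \<lparr> mvc = vc s, mview = view s, mvar = var s \<rparr>)
            | _ \<Rightarrow> mb)"
  have gs: "gstep M \<Phi> I eff g e = (L(A := s), mb')"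
    unfolding gstep_def Let_def s_def s1_def mb'_def L_def mb_def A_def by simp
  have I1: "\<forall>C. (evs_of M C \<inter> insert e P = {} \<longrightarrow> vc ((L(A := s)) C) = (\<lambda>_. 0) \<and> view ((L(A := s)) C) = (\<lambda>_. None)
            \<and> var ((L(A := s)) C) = (\<lambda>_. None) \<and> store ((L(A := s)) C) = \<sigma>0 C)
      \<and> (\<forall>p\<in>evs_of M C \<inter> insert e P. (\<forall>f\<in>evs_of M C \<inter> insert e P. loc_le M f p) \<longrightarrow>
            goodS M \<Phi> I (\<lambda>B. card (Dset M p B)) (vc ((L(A := s)) C)) (view ((L(A := s)) C)) (var ((L(A := s)) C))
            \<and> store ((L(A := s)) C) = val M p)"
  proof
    fix C
    show "(evs_of M C \<inter> insert e P = {} \<longrightarrow> vc ((L(A := s)) C) = (\<lambda>_. 0) \<and> view ((L(A := s)) C) = (\<lambda>_. None)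
            \<and> var ((L(A := s)) C) = (\<lambda>_. None) \<and> store ((L(A := s)) C) = \<sigma>0 C)
      \<and> (\<forall>p\<in>evs_of M C \<inter> insert e P. (\<forall>f\<in>evs_of M C \<inter> insert e P. loc_le M f p) \<longrightarrow>
            goodS M \<Phi> I (\<lambda>B. card (Dset M p B)) (vc ((L(A := s)) C)) (view ((L(A := s)) C)) (var ((L(A := s)) C))
            \<and> store ((L(A := s)) C) = val M p)"
    proof (cases "C = A")
      case True
      have pe: "\<And>p. p \<in> evs_of M A \<inter> insert e P \<Longrightarrow> (\<forall>f\<in>evs_of M A \<inter> insert e P. loc_le M f p) \<Longrightarrow> p = e"
      proof (rule ccontr)
        fix p assume a: "p \<in> evs_of M A \<inter> insert e P" "\<forall>f\<in>evs_of M A \<inter> insert e P. loc_le M f p" "p \<noteq> e"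
        then have "loc_less M p e" using PA by blast
        moreover have "loc_le M e p" using a eA by blast
        ultimately show False using loc_antisym unfolding loc_less_def by blast
      qed
      have "store s = val M e" unfolding sdef s3_def s2_def using effv by simp
      then show ?thesis using True pe GS eA by auto
    next
      case False
      then have "evs_of M C \<inter> insert e P = evs_of M C \<inter> P" using eA unfolding evs_of_def by auto
      then show ?thesis using False inv unfolding Inv_def L_def P_def by simp
    qed
  qed
  have I2: "\<forall>s'\<in>insert e P. \<forall>B. kind M s' = Send B \<longrightarrow>
       (\<exists>\<mu>. mb' s' = Some \<mu> \<and> goodS M \<Phi> I (\<lambda>B. card (Dset M s' B)) (mvc \<mu>) (mview \<mu>) (mvar \<mu>))"
  proof (intro ballI allI impI)
    fix s' B assume s': "s' \<in> insert e P" "kind M s' = Send B"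
    show "\<exists>\<mu>. mb' s' = Some \<mu> \<and> goodS M \<Phi> I (\<lambda>B. card (Dset M s' B)) (mvc \<mu>) (mview \<mu>) (mvar \<mu>)"
    proof (cases "s' = e")
      case True
      then show ?thesis using s' GS unfolding mb'_def by simp
    next
      case False
      then have "s' \<in> P" using s' by blast
      moreover have "mb' s' = mb s'" using False unfolding mb'_def by (cases "kind M e") auto
      ultimately show ?thesis using inv s' unfolding Inv_def mb_def P_def by simp
    qed
  qed
  have "Inv (Suc n) (gstep M \<Phi> I eff g e)"
    unfolding Inv_def gs P' using I1 I2 by simp
  moreover have "goodS M \<Phi> I (\<lambda>B. card (Dset M e B)) (vc (fst (gstep M \<Phi> I eff g e) A))
        (view (fst (gstep M \<Phi> I eff g e) A)) (var (fst (gstep M \<Phi> I eff g e) A))"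
    unfolding gs using GS by simp
  ultimately show ?thesis unfolding e_def A_def by simp
qed


lemma Inv_run: "n \<le> length xs \<Longrightarrow> Inv n (run M \<Phi> I eff \<sigma>0 (take n xs))"
proof (induction n)
  case 0
  then show ?case using Inv0 unfolding run_def by simp
next
  case (Suc n)
  then have n: "n < length xs" by simp
  have "run M \<Phi> I eff \<sigma>0 (take (Suc n) xs) = gstep M \<Phi> I eff (run M \<Phi> I eff \<sigma>0 (take n xs)) (xs ! n)"
    unfolding run_def using n by (simp add: take_Suc_conv_app_nth)
  then show ?case using step[OF n] Suc by simp
qed

lemma main_local: "i < length xs \<Longrightarrow>
  goodS M \<Phi> I (\<lambda>B. card (Dset M (xs ! i) B)) (vc (fst (run M \<Phi> I eff \<sigma>0 (take (Suc i) xs)) (pid M (xs ! i))))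
        (view (fst (run M \<Phi> I eff \<sigma>0 (take (Suc i) xs)) (pid M (xs ! i))))
        (var (fst (run M \<Phi> I eff \<sigma>0 (take (Suc i) xs)) (pid M (xs ! i))))"
proof -
  assume n: "i < length xs"
  have "run M \<Phi> I eff \<sigma>0 (take (Suc i) xs) = gstep M \<Phi> I eff (run M \<Phi> I eff \<sigma>0 (take i xs)) (xs ! i)"
    unfolding run_def using n by (simp add: take_Suc_conv_app_nth)
  then show ?thesis using step[OF n Inv_run] n by simp
qed

end

theorem lemma2:
  fixes M :: "('e, 'l :: finite, 'v, 'd) msc"
    and \<Phi> :: "('l, 'v, 'p) cpl set"
    and I :: "'p \<Rightarrow> 'd list \<Rightarrow> bool"
    and eff :: "'e \<Rightarrow> ('v \<Rightarrow> 'd) \<Rightarrow> ('v \<Rightarrow> 'd)"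
    and \<sigma>0 :: "'l \<Rightarrow> ('v \<Rightarrow> 'd)"
    and xs :: "'e list" and i :: nat
  assumes "wf_msc M" and "finite \<Phi>" and "val_induced M eff \<sigma>0"
    and "lin_ext M xs" and "i < length xs"
  shows "\<forall>B. let e = xs ! i; s = fst (run M \<Phi> I eff \<sigma>0 (take (Suc i) xs)) (pid M e) in
           vc s B = card {f \<in> evs_of M B. causal_le M f e}
         \<and> (vc s B = 0 \<longrightarrow> (\<forall>x. var s (B, x) = None) \<and> (\<forall>\<psi>. view s (B, \<psi>) = None))
         \<and> (vc s B > 0 \<longrightarrow> (\<forall>x\<in>Vars \<Phi>. var s (B, x) = Some (val M (kth M B (vc s B)) x)))
         \<and> (vc s B > 0 \<longrightarrow> (\<forall>\<psi>\<in>sub \<Phi>. view s (B, \<psi>) = Some (sat M I (kth M B (vc s B)) \<psi>)))"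
proof -
  interpret setting2 M xs \<Phi> I eff \<sigma>0
    by unfold_locales (rule assms)+
  have G: "goodS M \<Phi> I (\<lambda>B. card (Dset M (xs ! i) B)) (vc (fst (run M \<Phi> I eff \<sigma>0 (take (Suc i) xs)) (pid M (xs ! i))))
        (view (fst (run M \<Phi> I eff \<sigma>0 (take (Suc i) xs)) (pid M (xs ! i))))
        (var (fst (run M \<Phi> I eff \<sigma>0 (take (Suc i) xs)) (pid M (xs ! i))))"
    using main_local[OF assms(5)] .
  show ?thesis using G unfolding goodS_def Dset_def Let_def by simp
qed

end
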